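(* Let $\mathcal{H}=(V,E)$ be a hypergraph with connected components $\mathcal{H}_1=(V_1,E_1),\dots,\mathcal{H}_t=(V_t,E_t)$. Then $\kappa(\mathcal{H})=\sum_{i=1}^t\kappa(\mathcal{H}_i)$.
   Context: For $S\subseteq V$, $\mathcal{H}[S]$ is the hypergraph with vertex set $S$ and edge set $\{S\cap e : e\in E,\ S\cap e\neq\emptyset\}$. The reduced hypergraph $\mathsf{red}(\mathcal{H})$ has the same vertex set and is obtained by removing every edge $e$ for which there is another edge $e'\neq e$ with $e\subseteq e'$. $\tau^*(\mathcal{H})$ denotes the value of a maximum fractional edge packing of $\mathcal{H}$ (equivalently, of a minimum fractional vertex cover). The reduced quasi vertex-cover is $\kappa(\mathcal{H})=\max_{S\subseteq V}\tau^*(\mathsf{red}(\mathcal{H}[S]))$. *)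

theory Defs
  imports Main "HOL.Real"
begin

definition hypergraph :: "'a set \<Rightarrow> 'a set set \<Rightarrow> bool" where
  "hypergraph V E \<longleftrightarrow> finite V \<and> (\<forall>e\<in>E. e \<subseteq> V \<and> e \<noteq> {})"

definition induced_edges :: "'a set \<Rightarrow> 'a set set \<Rightarrow> 'a set set" where
  "induced_edges S E = {S \<inter> e | e. e \<in> E \<and> S \<inter> e \<noteq> {}}"

definition red_edges :: "'a set set \<Rightarrow> 'a set set" where
  "red_edges E = {e \<in> E. \<not> (\<exists>e'\<in>E. e' \<noteq> e \<and> e \<subseteq> e')}"

definition frac_edge_packing :: "'a set \<Rightarrow> 'a set set \<Rightarrow> ('a set \<Rightarrow> real) \<Rightarrow> bool" where
  "frac_edge_packing V E w \<longleftrightarrow>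
     (\<forall>e\<in>E. 0 \<le> w e) \<and> (\<forall>v\<in>V. (\<Sum>e\<in>{e\<in>E. v \<in> e}. w e) \<le> 1)"

definition tau_star :: "'a set \<Rightarrow> 'a set set \<Rightarrow> real" where
  "tau_star V E = Sup {(\<Sum>e\<in>E. w e) | w. frac_edge_packing V E w}"

definition kappa :: "'a set \<Rightarrow> 'a set set \<Rightarrow> real" where
  "kappa V E = Max ((\<lambda>S. tau_star S (red_edges (induced_edges S E))) ` Pow V)"

definition adj_rel :: "'a set \<Rightarrow> 'a set set \<Rightarrow> ('a \<times> 'a) set" where
  "adj_rel V E = {(u, v). u \<in> V \<and> v \<in> V \<and> (\<exists>e\<in>E. u \<in> e \<and> v \<in> e)}"

definition components :: "'a set \<Rightarrow> 'a set set \<Rightarrow> 'a set set" where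
  "components V E = {(adj_rel V E)\<^sup>* `` {v} | v. v \<in> V}"

definition component_edges :: "'a set set \<Rightarrow> 'a set \<Rightarrow> 'a set set" where
  "component_edges E C = {e \<in> E. e \<subseteq> C}"

end

theory Submission
  imports Defs
begin

lemma sup_split:
  fixes A B C :: "real set"
  assumes "A \<noteq> {}" "B \<noteq> {}" "C \<noteq> {}" "bdd_above A" "bdd_above B" "bdd_above C"
    and ab: "\<And>a b. a \<in> A \<Longrightarrow> b \<in> B \<Longrightarrow> \<exists>c\<in>C. a + b \<le> c"
    and cc: "\<And>c. c \<in> C \<Longrightarrow> \<exists>a\<in>A. \<exists>b\<in>B. c \<le> a + b"
  shows "Sup C = Sup A + Sup B"
proof (rule antisym)
  show "Sup C \<le> Sup A + Sup B"
  proof (rule cSup_least[OF assms(3)])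
    fix c assume "c \<in> C"
    then obtain a b where "a \<in> A" "b \<in> B" "c \<le> a + b" using cc by blast
    moreover have "a \<le> Sup A" using cSup_upper[OF \<open>a \<in> A\<close> assms(4)] .
    moreover have "b \<le> Sup B" using cSup_upper[OF \<open>b \<in> B\<close> assms(5)] .
    ultimately show "c \<le> Sup A + Sup B" by linarith
  qed
next
  have "\<And>b. b \<in> B \<Longrightarrow> Sup A \<le> Sup C - b"
  proof -
    fix b assume b: "b \<in> B"
    show "Sup A \<le> Sup C - b"
    proof (rule cSup_least[OF assms(1)])
      fix a assume "a \<in> A"
      then obtain c where "c \<in> C" "a + b \<le> c" using ab b by blast
      moreover have "c \<le> Sup C" using cSup_upper[OF \<open>c \<in> C\<close> assms(6)] .
      ultimately show "a \<le> Sup C - b" by linarith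
    qed
  qed
  then have "\<And>b. b \<in> B \<Longrightarrow> b \<le> Sup C - Sup A" by fastforce
  then have "Sup B \<le> Sup C - Sup A" using cSup_least[OF assms(2)] by blast
  then show "Sup A + Sup B \<le> Sup C" by linarith
qed

lemma fep_nn: "frac_edge_packing S E w \<Longrightarrow> e \<in> E \<Longrightarrow> 0 \<le> w e"
  unfolding frac_edge_packing_def by blast

lemma fep_le: "frac_edge_packing S E w \<Longrightarrow> v \<in> S \<Longrightarrow> (\<Sum>e\<in>{e\<in>E. v \<in> e}. w e) \<le> 1"
  unfolding frac_edge_packing_def by blast

lemma fepI: "(\<And>e. e \<in> E \<Longrightarrow> 0 \<le> w e) \<Longrightarrow> (\<And>v. v \<in> S \<Longrightarrow> (\<Sum>e\<in>{e\<in>E. v \<in> e}. w e) \<le> 1)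
  \<Longrightarrow> frac_edge_packing S E w"
  unfolding frac_edge_packing_def by blast

definition PK :: "'a set \<Rightarrow> 'a set set \<Rightarrow> real set" where
  "PK S E = {(\<Sum>e\<in>E. w e) | w. frac_edge_packing S E w}"

lemma tau_PK: "tau_star S E = Sup (PK S E)"
  unfolding tau_star_def PK_def by simp

lemma PK_ne: "PK S E \<noteq> {}"
proof -
  have "frac_edge_packing S E (\<lambda>_. 0)" unfolding frac_edge_packing_def by simp
  then show ?thesis unfolding PK_def by blast
qed

lemma PK_bdd:
  assumes "finite E" "\<forall>e\<in>E. e \<noteq> {} \<and> e \<subseteq> S"
  shows "bdd_above (PK S E)"
proof (rule bdd_aboveI[of _ "real (card E)"])
  fix x assume "x \<in> PK S E"
  then obtain w where x: "x = (\<Sum>e\<in>E. w e)" and w: "frac_edge_packing S E w"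
    unfolding PK_def by blast
  have nn: "\<forall>e\<in>E. 0 \<le> w e" and le1: "\<forall>v\<in>S. (\<Sum>e\<in>{e\<in>E. v \<in> e}. w e) \<le> 1"
    using fep_nn[OF w] fep_le[OF w] by auto
  have "w e \<le> 1" if he: "e \<in> E" for e
  proof -
    obtain v where "v \<in> e" using assms(2) he by blast
    then have "v \<in> S" using assms(2) he by blast
    have fin: "finite {e\<in>E. v \<in> e}" using assms(1) by simp
    have mem: "e \<in> {e\<in>E. v \<in> e}" using he \<open>v \<in> e\<close> by simp
    have "w e \<le> (\<Sum>e\<in>{e\<in>E. v \<in> e}. w e)"
      using member_le_sum[OF mem _ fin, of w] nn by simp
    also have "\<dots> \<le> 1" using le1 \<open>v \<in> S\<close> by blast
    finally show ?thesis .
  qed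
  then have "(\<Sum>e\<in>E. w e) \<le> (\<Sum>e\<in>E. 1)" by (intro sum_mono) auto
  then show "x \<le> real (card E)" using x by simp
qed

lemma tau_split:
  assumes fin: "finite E" and ed: "\<forall>e\<in>E. e \<noteq> {} \<and> e \<subseteq> S"
    and sp: "\<forall>e\<in>E. e \<subseteq> C \<or> e \<inter> C = {}"
  shows "tau_star S E = tau_star (S \<inter> C) {e\<in>E. e \<subseteq> C} + tau_star (S - C) {e\<in>E. \<not> e \<subseteq> C}"
proof -
  define E1 where "E1 = {e\<in>E. e \<subseteq> C}"
  define E2 where "E2 = {e\<in>E. \<not> e \<subseteq> C}"
  have E12: "E = E1 \<union> E2" "E1 \<inter> E2 = {}" unfolding E1_def E2_def by auto
  have f1: "finite E1" "finite E2" using fin unfolding E1_def E2_def by auto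
  have ed1: "\<forall>e\<in>E1. e \<noteq> {} \<and> e \<subseteq> S \<inter> C" using ed unfolding E1_def by auto
  have ed2: "\<forall>e\<in>E2. e \<noteq> {} \<and> e \<subseteq> S - C" using ed sp unfolding E2_def by blast
  have "Sup (PK S E) = Sup (PK (S \<inter> C) E1) + Sup (PK (S - C) E2)"
  proof (rule sup_split[OF PK_ne PK_ne PK_ne PK_bdd[OF f1(1) ed1] PK_bdd[OF f1(2) ed2] PK_bdd[OF fin ed]])
    fix a b assume "a \<in> PK (S \<inter> C) E1" "b \<in> PK (S - C) E2"
    then obtain w1 w2 where a: "a = (\<Sum>e\<in>E1. w1 e)" and w1: "frac_edge_packing (S \<inter> C) E1 w1"
      and b: "b = (\<Sum>e\<in>E2. w2 e)" and w2: "frac_edge_packing (S - C) E2 w2"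
      unfolding PK_def by blast
    define w where "w e = (if e \<in> E1 then w1 e else w2 e)" for e
    have "frac_edge_packing S E w"
    proof (rule fepI)
      fix e assume "e \<in> E" then show "0 \<le> w e"
        using fep_nn[OF w1, of e] fep_nn[OF w2, of e] E12 unfolding w_def by auto
    next
      fix v assume v: "v \<in> S"
      show "(\<Sum>e\<in>{e \<in> E. v \<in> e}. w e) \<le> 1"
      proof (cases "v \<in> C")
        case True
        have "{e \<in> E. v \<in> e} = {e \<in> E1. v \<in> e}" using ed2 E12 True by blast
        then have "(\<Sum>e\<in>{e \<in> E. v \<in> e}. w e) = (\<Sum>e\<in>{e \<in> E1. v \<in> e}. w1 e)"
          unfolding w_def by (intro sum.cong) auto
        then show ?thesis using fep_le[OF w1, of v] v True by simp
      next
        case False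
        have "{e \<in> E. v \<in> e} = {e \<in> E2. v \<in> e}" using ed1 E12 False by blast
        then have "(\<Sum>e\<in>{e \<in> E. v \<in> e}. w e) = (\<Sum>e\<in>{e \<in> E2. v \<in> e}. w2 e)"
          unfolding w_def using E12(2) by (intro sum.cong) auto
        then show ?thesis using fep_le[OF w2, of v] v False by simp
      qed
    qed
    moreover have "(\<Sum>e\<in>E. w e) = a + b"
    proof -
      have "(\<Sum>e\<in>E. w e) = (\<Sum>e\<in>E1. w e) + (\<Sum>e\<in>E2. w e)"
        using E12 f1 by (simp add: sum.union_disjoint)
      also have "(\<Sum>e\<in>E1. w e) = a" unfolding a w_def by simp
      also have "(\<Sum>e\<in>E2. w e) = b" unfolding b w_def using E12(2) by (intro sum.cong) auto
      finally show ?thesis .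
    qed
    ultimately show "\<exists>c\<in>PK S E. a + b \<le> c" unfolding PK_def by force
  next
    fix c assume "c \<in> PK S E"
    then obtain w where c: "c = (\<Sum>e\<in>E. w e)" and w: "frac_edge_packing S E w"
      unfolding PK_def by blast
    have p1: "frac_edge_packing (S \<inter> C) E1 w"
    proof (rule fepI)
      fix e assume "e \<in> E1" then show "0 \<le> w e" using fep_nn[OF w, of e] E12 by auto
    next
      fix v assume v: "v \<in> S \<inter> C"
      have "(\<Sum>e\<in>{e \<in> E1. v \<in> e}. w e) \<le> (\<Sum>e\<in>{e \<in> E. v \<in> e}. w e)"
        by (rule sum_mono2) (use fin fep_nn[OF w] E12 in auto)
      also have "\<dots> \<le> 1" using fep_le[OF w, of v] v by blast
      finally show "(\<Sum>e\<in>{e \<in> E1. v \<in> e}. w e) \<le> 1" .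
    qed
    have p2: "frac_edge_packing (S - C) E2 w"
    proof (rule fepI)
      fix e assume "e \<in> E2" then show "0 \<le> w e" using fep_nn[OF w, of e] E12 by auto
    next
      fix v assume v: "v \<in> S - C"
      have "(\<Sum>e\<in>{e \<in> E2. v \<in> e}. w e) \<le> (\<Sum>e\<in>{e \<in> E. v \<in> e}. w e)"
        by (rule sum_mono2) (use fin fep_nn[OF w] E12 in auto)
      also have "\<dots> \<le> 1" using fep_le[OF w, of v] v by blast
      finally show "(\<Sum>e\<in>{e \<in> E2. v \<in> e}. w e) \<le> 1" .
    qed
    have "c = (\<Sum>e\<in>E1. w e) + (\<Sum>e\<in>E2. w e)"
      using E12 f1 c by (simp add: sum.union_disjoint)
    then show "\<exists>a\<in>PK (S \<inter> C) E1. \<exists>b\<in>PK (S - C) E2. c \<le> a + b"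
      using p1 p2 unfolding PK_def by fastforce
  qed
  then show ?thesis unfolding tau_PK E1_def E2_def .
qed


lemma tau_empty: "tau_star S {} = 0"
proof -
  have "frac_edge_packing S {} (\<lambda>_. 0)" by (rule fepI) auto
  then have "PK S {} = {0}" unfolding PK_def by auto
  then show ?thesis unfolding tau_PK by simp
qed

lemma tau_family:
  assumes "finite P" "pairwise disjnt P" "finite E"
    "\<forall>e\<in>E. e \<noteq> {} \<and> e \<subseteq> S \<and> (\<exists>C\<in>P. e \<subseteq> C)"
  shows "tau_star S E = (\<Sum>C\<in>P. tau_star (S \<inter> C) {e\<in>E. e \<subseteq> C})"
  using assms
proof (induction P arbitrary: S E rule: finite_induct)
  case empty
  then have "E = {}" by auto
  then show ?case by (simp add: tau_empty)
next
  case (insert C P)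
  have pw: "pairwise disjnt P" using insert.prems(1) by (simp add: pairwise_insert)
  have dC: "\<And>C'. C' \<in> P \<Longrightarrow> C \<inter> C' = {}"
    using insert.prems(1) insert.hyps(2) unfolding pairwise_insert disjnt_def by blast
  have sp: "\<forall>e\<in>E. e \<subseteq> C \<or> e \<inter> C = {}"
  proof
    fix e assume "e \<in> E"
    then obtain C' where C': "C' \<in> insert C P" "e \<subseteq> C'"
      using bspec[OF insert.prems(3) \<open>e \<in> E\<close>] by (elim conjE bexE)
    show "e \<subseteq> C \<or> e \<inter> C = {}"
    proof (cases "C' = C")
      case True then show ?thesis using C' by simp
    next
      case False then have "C' \<in> P" using C' by simp
      then have "C \<inter> C' = {}" by (rule dC)
      then show ?thesis using C' by blast
    qed
  qed
  have ed: "\<forall>e\<in>E. e \<noteq> {} \<and> e \<subseteq> S" using insert.prems(3) by blast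
  have "tau_star S E = tau_star (S \<inter> C) {e\<in>E. e \<subseteq> C} + tau_star (S - C) {e\<in>E. \<not> e \<subseteq> C}"
    by (rule tau_split[OF insert.prems(2) ed sp])
  also have "tau_star (S - C) {e\<in>E. \<not> e \<subseteq> C}
     = (\<Sum>C'\<in>P. tau_star ((S - C) \<inter> C') {e\<in>{e\<in>E. \<not> e \<subseteq> C}. e \<subseteq> C'})"
  proof (rule insert.IH[OF pw])
    show "finite {e \<in> E. \<not> e \<subseteq> C}" using insert.prems(2) by simp
    show "\<forall>e\<in>{e \<in> E. \<not> e \<subseteq> C}. e \<noteq> {} \<and> e \<subseteq> S - C \<and> (\<exists>C\<in>P. e \<subseteq> C)"
    proof
      fix e assume "e \<in> {e \<in> E. \<not> e \<subseteq> C}"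
      then have e: "e \<in> E" "\<not> e \<subseteq> C" by auto
      then have "e \<inter> C = {}" using sp by blast
      moreover have "e \<noteq> {}" "e \<subseteq> S" using ed e by auto
      moreover obtain C' where C': "C' \<in> insert C P" "e \<subseteq> C'"
        using bspec[OF insert.prems(3) e(1)] by (elim conjE bexE)
      moreover have "C' \<noteq> C" using C' e by blast
      ultimately show "e \<noteq> {} \<and> e \<subseteq> S - C \<and> (\<exists>C\<in>P. e \<subseteq> C)" by blast
    qed
  qed
  also have "\<dots> = (\<Sum>C'\<in>P. tau_star (S \<inter> C') {e\<in>E. e \<subseteq> C'})"
  proof (rule sum.cong[OF refl])
    fix C' assume "C' \<in> P"
    then have d: "C \<inter> C' = {}" by (rule dC)
    have "(S - C) \<inter> C' = S \<inter> C'" using d by blast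
    moreover have "{e\<in>{e\<in>E. \<not> e \<subseteq> C}. e \<subseteq> C'} = {e\<in>E. e \<subseteq> C'}"
    proof (rule Collect_cong)
      fix e show "(e \<in> {e\<in>E. \<not> e \<subseteq> C} \<and> e \<subseteq> C') = (e \<in> E \<and> e \<subseteq> C')"
      proof (cases "e \<in> E")
        case True then have "e \<noteq> {}" using ed by blast
        then show ?thesis using d by auto
      qed simp
    qed
    ultimately show "tau_star ((S - C) \<inter> C') {e\<in>{e\<in>E. \<not> e \<subseteq> C}. e \<subseteq> C'}
      = tau_star (S \<inter> C') {e\<in>E. e \<subseteq> C'}" by simp
  qed
  finally show ?case using insert.hyps by simp
qed

lemma red_block:
  assumes "pairwise disjnt P" "C \<in> P" "\<forall>x\<in>X. x \<noteq> {} \<and> (\<exists>C\<in>P. x \<subseteq> C)"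
  shows "{x \<in> red_edges X. x \<subseteq> C} = red_edges {x\<in>X. x \<subseteq> C}"
proof -
  have key: "x' \<subseteq> C" if hx: "x \<in> X" "x' \<in> X" "x \<subseteq> C" "x \<subseteq> x'" for x x'
  proof -
    obtain C' where C': "C' \<in> P" "x' \<subseteq> C'"
      using bspec[OF assms(3) hx(2)] by (elim conjE bexE)
    have "x \<noteq> {}" using bspec[OF assms(3) hx(1)] by (elim conjE)
    then have "C \<inter> C' \<noteq> {}" using hx(3,4) C'(2) by blast
    then have "\<not> disjnt C C'" unfolding disjnt_def by simp
    then have "C = C'" using assms(1,2) C'(1) unfolding pairwise_def by metis
    then show ?thesis using C'(2) by simp
  qed
  show ?thesis
  proof (rule set_eqI)
    fix x
    show "x \<in> {x \<in> red_edges X. x \<subseteq> C} \<longleftrightarrow> x \<in> red_edges {x\<in>X. x \<subseteq> C}"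
    proof
      assume "x \<in> {x \<in> red_edges X. x \<subseteq> C}"
      then show "x \<in> red_edges {x\<in>X. x \<subseteq> C}" unfolding red_edges_def by auto
    next
      assume a: "x \<in> red_edges {x\<in>X. x \<subseteq> C}"
      then have x: "x \<in> X" "x \<subseteq> C" and nx: "\<And>e'. e' \<in> X \<Longrightarrow> e' \<subseteq> C \<Longrightarrow> e' \<noteq> x \<Longrightarrow> \<not> x \<subseteq> e'"
        unfolding red_edges_def by auto
      have "\<And>e'. e' \<in> X \<Longrightarrow> e' \<noteq> x \<Longrightarrow> \<not> x \<subseteq> e'"
        using nx key x by metis
      then show "x \<in> {x \<in> red_edges X. x \<subseteq> C}" unfolding red_edges_def using x by auto
    qed
  qed
qed

context
  fixes V :: "'a set" and E :: "'a set set"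
  assumes hg: "hypergraph V E"
begin

abbreviation "R \<equiv> (adj_rel V E)\<^sup>*"

lemma symR: "sym R"
  by (rule sym_rtrancl) (auto simp: sym_def adj_rel_def)

lemma R_in_V: "(u, x) \<in> R \<Longrightarrow> u \<in> V \<Longrightarrow> x \<in> V"
  by (induction rule: rtrancl_induct) (auto simp: adj_rel_def)

lemma comp_sub: "C \<in> components V E \<Longrightarrow> C \<subseteq> V"
  unfolding components_def using R_in_V by blast

lemma comp_fin: "finite (components V E)"
proof -
  have "components V E = (\<lambda>v. R `` {v}) ` V" unfolding components_def by blast
  then show ?thesis using hg unfolding hypergraph_def by simp
qed

lemma comp_disj: "pairwise disjnt (components V E)"
proof (rule pairwiseI)
  fix C1 C2 assume "C1 \<in> components V E" "C2 \<in> components V E" "C1 \<noteq> C2"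
  then obtain u v where C: "C1 = R `` {u}" "C2 = R `` {v}" unfolding components_def by blast
  show "disjnt C1 C2"
  proof (rule ccontr)
    assume "\<not> disjnt C1 C2"
    then obtain x where "(u, x) \<in> R" "(v, x) \<in> R" using C unfolding disjnt_def by blast
    then have "(u, v) \<in> R" using symR by (meson rtrancl_trans symD)
    then have "R `` {u} = R `` {v}" using symR
      by (auto intro: rtrancl_trans dest: symD)
    then show False using C \<open>C1 \<noteq> C2\<close> by simp
  qed
qed

lemma edge_in_comp: "e \<in> E \<Longrightarrow> \<exists>C\<in>components V E. e \<subseteq> C"
proof -
  assume e: "e \<in> E"
  then obtain u where u: "u \<in> e" using hg unfolding hypergraph_def by blast
  have "u \<in> V" using e u hg unfolding hypergraph_def by blast
  have "e \<subseteq> R `` {u}"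
  proof
    fix x assume "x \<in> e"
    then have "(u, x) \<in> adj_rel V E" using e u hg unfolding adj_rel_def hypergraph_def by blast
    then show "x \<in> R `` {u}" by auto
  qed
  then show ?thesis using \<open>u \<in> V\<close> unfolding components_def by blast
qed

end


lemma ind_block:
  assumes hg: "hypergraph V E" and C: "C \<in> components V E"
  shows "{x \<in> induced_edges S E. x \<subseteq> C} = induced_edges (S \<inter> C) (component_edges E C)"
proof
  show "{x \<in> induced_edges S E. x \<subseteq> C} \<subseteq> induced_edges (S \<inter> C) (component_edges E C)"
  proof
    fix x assume "x \<in> {x \<in> induced_edges S E. x \<subseteq> C}"
    then obtain e where e: "e \<in> E" "x = S \<inter> e" "S \<inter> e \<noteq> {}" "S \<inter> e \<subseteq> C"
      unfolding induced_edges_def by blast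
    obtain C' where C': "C' \<in> components V E" "e \<subseteq> C'" using edge_in_comp[OF hg e(1)] by blast
    have "C \<inter> C' \<noteq> {}" using e C' by blast
    then have "C = C'" using comp_disj[OF hg] C C' unfolding pairwise_def disjnt_def by blast
    then have "e \<subseteq> C" using C' by simp
    then show "x \<in> induced_edges (S \<inter> C) (component_edges E C)"
      unfolding induced_edges_def component_edges_def using e by blast
  qed
next
  show "induced_edges (S \<inter> C) (component_edges E C) \<subseteq> {x \<in> induced_edges S E. x \<subseteq> C}"
    unfolding induced_edges_def component_edges_def by blast
qed

theorem lemma3p5:
  fixes V :: "'a set" and E :: "'a set set"
  assumes "hypergraph V E"
  shows "kappa V E = (\<Sum>C\<in>components V E. kappa C (component_edges E C))"
proof -
  let ?P = "components V E"
  define f where "f = (\<lambda>S. tau_star S (red_edges (induced_edges S E)))"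
  define g where "g = (\<lambda>C T. tau_star T (red_edges (induced_edges T (component_edges E C))))"
  have finV: "finite V" using assms unfolding hypergraph_def by blast
  have kV: "kappa V E = Max (f ` Pow V)" unfolding kappa_def f_def ..
  have kC: "kappa C (component_edges E C) = Max (g C ` Pow C)" for C
    unfolding kappa_def g_def ..
  have finC: "finite C" if "C \<in> ?P" for C using comp_sub[OF assms that] finV finite_subset by blast
  have decomp: "f S = (\<Sum>C\<in>?P. g C (S \<inter> C))" if SV: "S \<subseteq> V" for S
  proof -
    define X where "X = red_edges (induced_edges S E)"
    have Ip: "\<forall>x\<in>induced_edges S E. x \<noteq> {} \<and> x \<subseteq> S \<and> (\<exists>C\<in>?P. x \<subseteq> C)"
      unfolding induced_edges_def using edge_in_comp[OF assms] by blast
    then have Xp: "\<forall>x\<in>X. x \<noteq> {} \<and> x \<subseteq> S \<and> (\<exists>C\<in>?P. x \<subseteq> C)"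
      unfolding X_def red_edges_def by blast
    have "finite S" using SV finV finite_subset by blast
    then have finX: "finite X" using Xp by (meson Pow_iff finite_Pow_iff finite_subset subsetI)
    have "f S = (\<Sum>C\<in>?P. tau_star (S \<inter> C) {x\<in>X. x \<subseteq> C})"
      unfolding f_def X_def[symmetric]
      by (rule tau_family[OF comp_fin[OF assms] comp_disj[OF assms] finX Xp])
    also have "\<dots> = (\<Sum>C\<in>?P. g C (S \<inter> C))"
    proof (rule sum.cong[OF refl])
      fix C assume C: "C \<in> ?P"
      have "{x\<in>X. x \<subseteq> C} = red_edges {x\<in>induced_edges S E. x \<subseteq> C}"
        unfolding X_def using red_block[OF comp_disj[OF assms] C] Ip by blast
      also have "\<dots> = red_edges (induced_edges (S \<inter> C) (component_edges E C))"
        using ind_block[OF assms C] by simp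
      finally show "tau_star (S \<inter> C) {x\<in>X. x \<subseteq> C} = g C (S \<inter> C)"
        unfolding g_def by simp
    qed
    finally show ?thesis .
  qed
  show ?thesis
  proof (rule antisym)
    show "kappa V E \<le> (\<Sum>C\<in>?P. kappa C (component_edges E C))"
      unfolding kV
    proof (rule Max.boundedI)
      show "finite (f ` Pow V)" using finV by simp
      show "f ` Pow V \<noteq> {}" by blast
      fix y assume "y \<in> f ` Pow V"
      then obtain S where S: "S \<subseteq> V" "y = f S" by blast
      have "y = (\<Sum>C\<in>?P. g C (S \<inter> C))" using decomp S by simp
      also have "\<dots> \<le> (\<Sum>C\<in>?P. kappa C (component_edges E C))"
      proof (rule sum_mono)
        fix C assume "C \<in> ?P"
        then show "g C (S \<inter> C) \<le> kappa C (component_edges E C)"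
          unfolding kC using finC by (intro Max_ge) auto
      qed
      finally show "y \<le> (\<Sum>C\<in>?P. kappa C (component_edges E C))" .
    qed
  next
    have "\<forall>C\<in>?P. \<exists>T\<in>Pow C. g C T = kappa C (component_edges E C)"
    proof
      fix C assume "C \<in> ?P"
      then have "Max (g C ` Pow C) \<in> g C ` Pow C" using finC by (intro Max_in) auto
      then show "\<exists>T\<in>Pow C. g C T = kappa C (component_edges E C)" unfolding kC by force
    qed
    then obtain T where T: "\<And>C. C \<in> ?P \<Longrightarrow> T C \<subseteq> C \<and> g C (T C) = kappa C (component_edges E C)"
      by (metis PowD)
    define S where "S = (\<Union>C\<in>?P. T C)"
    have SV: "S \<subseteq> V" unfolding S_def using T comp_sub[OF assms] by blast
    have SC: "S \<inter> C = T C" if C: "C \<in> ?P" for C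
    proof
      show "T C \<subseteq> S \<inter> C" unfolding S_def using T C by blast
      show "S \<inter> C \<subseteq> T C"
      proof
        fix x assume "x \<in> S \<inter> C"
        then obtain C' where "C' \<in> ?P" "x \<in> T C'" "x \<in> C" unfolding S_def by blast
        then have "x \<in> C'" using T by blast
        then have "C = C'" using comp_disj[OF assms] C \<open>C' \<in> ?P\<close> \<open>x \<in> C\<close>
          unfolding pairwise_def disjnt_def by blast
        then show "x \<in> T C" using \<open>x \<in> T C'\<close> by simp
      qed
    qed
    have "(\<Sum>C\<in>?P. kappa C (component_edges E C)) = (\<Sum>C\<in>?P. g C (S \<inter> C))"
      using T SC by (intro sum.cong) auto
    also have "\<dots> = f S" using decomp SV by simp
    also have "\<dots> \<le> kappa V E" unfolding kV using finV SV by (intro Max_ge) auto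
    finally show "(\<Sum>C\<in>?P. kappa C (component_edges E C)) \<le> kappa V E" .
  qed
qed

end
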